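(* Let $X=\{1,\dots,n\}$ with $n\ge2$, $Y$ a finite set, and $Q=(q(y,y'))$ a symmetric irreducible stochastic matrix on $Y$ with distinct eigenvalues $\lambda_0=1,\lambda_1,\dots,\lambda_m$ and eigenspaces $W_0,\dots,W_m$ (notation in context). Let $1\le h\le n-1$, $0<p_0<1$, and let $P=p_0M+(1-p_0)\frac{\Delta_h}{h(n-h)|Y|}$ be the second crested product on $L(\Theta_h)$. Let $\underline a=(a_0,\dots,a_m)$ be a type with $a_0+\cdots+a_m=h$ and let $k$ be an integer with $\ell(\underline a)\le k\le h$. Then every $F\in P_{h,\underline a,k}$ satisfies $PF=\mu F$ with $$\mu=p_0\cdot\frac1h\sum_{j=0}^ma_j\lambda_j+(1-p_0)\frac{(n+\ell(\underline a)-k-h)(h-k+1)-(n-h)}{h(n-h)}.$$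
   Context: $Q$ acts on $L(Y)$ by $(Qf)(y)=\sum_{y'}q(y,y')f(y')$; $W_0$ is the space of constant functions and $W_j$ the eigenspace of $\lambda_j$. For $0\le k\le n$, $\Theta_k$ is the set of functions $\theta$ with $\mathrm{dom}(\theta)$ a $k$-subset of $X$ and values in $Y$ ($\Theta_0$ = empty function); $\varphi\subseteq\theta$ means $\mathrm{dom}\varphi\subseteq\mathrm{dom}\theta$ and $\theta|_{\mathrm{dom}\varphi}=\varphi$. Operators on $L(\Theta_h)$: $(MF)(\theta)=\frac1h\sum_{j\in\mathrm{dom}\theta}\sum_{y\in Y}q(\theta(j),y)F(\theta_{j\to y})$, where $\theta_{j\to y}$ equals $\theta$ except that its value at $j$ is $y$; $(\Delta_hF)(\theta)=\sum F(\varphi)$ over all $\varphi\in\Theta_h$ with $|\mathrm{dom}\varphi\cap\mathrm{dom}\theta|=h-1$ and $\varphi=\theta$ on $\mathrm{dom}\varphi\cap\mathrm{dom}\theta$ (each row of $\Delta_h$ has $h(n-h)|Y|$ nonzero entries). For $1\le k\le n$: $D_k:L(\Theta_k)\to L(\Theta_{k-1})$, $(D_kF)(\varphi)=\sum_{\theta\in\Theta_k:\theta\supseteq\varphi}F(\theta)$, and $D_k^*:L(\Theta_{k-1})\to L(\Theta_k)$, $(D_k^*F)(\theta)=\sum_{\varphi\subseteq\theta}F(\varphi)$; $D_0:=0$. Types $\underline c=(c_0,\dots,c_m)$ of nonnegative integers, $|\underline c|=\sum c_i$, $\ell(\underline c)=c_1+\cdots+c_m$, $\underline c'=(c_0-1,c_1,\dots,c_m)$.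 A fundamental function of type $\underline c$ on $A\subseteq X$, $|A|=|\underline c|$, is $F=\bigotimes_{j\in A}F^j$ ($F(\theta)=\prod_{j\in A}F^j(\theta(j))$ if $\mathrm{dom}\theta=A$, $0$ otherwise) with each $F^j$ in some $W_{i_j}$ and exactly $c_i$ indices with $i_j=i$; $P_{k,\underline c,A}$ is their span, $P_{k,\underline c}=\bigoplus_{|A|=k}P_{k,\underline c,A}$ ($\{0\}$ if an entry is negative). $D_{k,\underline c}=D_k|_{P_{k,\underline c}}$, $D^*_{k,\underline c}=D^*_k|_{P_{k-1,\underline c'}}$. For $|\underline c|=k$: $P_{k,\underline c,k}=\ker D_{k,\underline c}$; for $k<h\le n$, $|\underline c|=h$, $\ell(\underline c)\le k$: $P_{h,\underline c,k}=D^*_{h,\underline c}(P_{h-1,\underline c',k})$. *)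

theory Defs
  imports "HOL-Analysis.Analysis"
begin

(* Ground set X = {1..n}; Y is a finite type 'y; functions theta : partial maps nat -> 'y *)

definition Qop :: "('y::finite \<Rightarrow> 'y \<Rightarrow> real) \<Rightarrow> ('y \<Rightarrow> real) \<Rightarrow> 'y \<Rightarrow> real" where
  "Qop q f y = (\<Sum>y'\<in>UNIV. q y y' * f y')"

definition stochastic_sym_irred :: "('y::finite \<Rightarrow> 'y \<Rightarrow> real) \<Rightarrow> bool" where
  "stochastic_sym_irred q \<longleftrightarrow>
     (\<forall>y y'. q y y' \<ge> 0) \<and> (\<forall>y. (\<Sum>y'\<in>UNIV. q y y') = 1) \<and>
     (\<forall>y y'. q y y' = q y' y) \<and>
     (\<forall>y y'. (y, y') \<in> {(a, b). q a b > 0}\<^sup>*)"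

definition Wsp :: "('y::finite \<Rightarrow> 'y \<Rightarrow> real) \<Rightarrow> (nat \<Rightarrow> real) \<Rightarrow> nat \<Rightarrow> ('y \<Rightarrow> real) set" where
  "Wsp q lam j = {f. Qop q f = (\<lambda>y. lam j * f y)}"

definition Theta :: "nat \<Rightarrow> nat \<Rightarrow> (nat \<Rightarrow> 'y option) set" where
  "Theta n k = {\<theta>. dom \<theta> \<subseteq> {1..n} \<and> card (dom \<theta>) = k}"

definition Mop :: "nat \<Rightarrow> nat \<Rightarrow> ('y::finite \<Rightarrow> 'y \<Rightarrow> real) \<Rightarrow>
    ((nat \<Rightarrow> 'y option) \<Rightarrow> real) \<Rightarrow> (nat \<Rightarrow> 'y option) \<Rightarrow> real" where
  "Mop n h q F \<theta> = (if \<theta> \<in> Theta n h then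
      (1 / real h) * (\<Sum>j\<in>dom \<theta>. \<Sum>y\<in>UNIV. q (the (\<theta> j)) y * F (\<theta>(j \<mapsto> y)))
    else 0)"

definition Deltaop :: "nat \<Rightarrow> nat \<Rightarrow> ((nat \<Rightarrow> 'y option) \<Rightarrow> real) \<Rightarrow> (nat \<Rightarrow> 'y option) \<Rightarrow> real" where
  "Deltaop n h F \<theta> = (if \<theta> \<in> Theta n h then
      (\<Sum>\<phi>\<in>{\<phi>\<in>Theta n h. card (dom \<phi> \<inter> dom \<theta>) = h - 1 \<and>
                     (\<forall>x\<in>dom \<phi> \<inter> dom \<theta>. \<phi> x = \<theta> x)}. F \<phi>)
    else 0)"

definition Pop :: "nat \<Rightarrow> nat \<Rightarrow> real \<Rightarrow> ('y::finite \<Rightarrow> 'y \<Rightarrow> real) \<Rightarrow>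
    ((nat \<Rightarrow> 'y option) \<Rightarrow> real) \<Rightarrow> (nat \<Rightarrow> 'y option) \<Rightarrow> real" where
  "Pop n h p0 q F \<theta> = p0 * Mop n h q F \<theta>
      + (1 - p0) * Deltaop n h F \<theta> / (real h * real (n - h) * real CARD('y))"

definition Dop :: "nat \<Rightarrow> nat \<Rightarrow> ((nat \<Rightarrow> 'y option) \<Rightarrow> real) \<Rightarrow> (nat \<Rightarrow> 'y option) \<Rightarrow> real" where
  "Dop n k F \<phi> = (if k = 0 then 0 else if \<phi> \<in> Theta n (k - 1) then
      (\<Sum>\<theta>\<in>{\<theta>\<in>Theta n k. \<phi> \<subseteq>\<^sub>m \<theta>}. F \<theta>) else 0)"

definition Dstar :: "nat \<Rightarrow> nat \<Rightarrow> ((nat \<Rightarrow> 'y option) \<Rightarrow> real) \<Rightarrow> (nat \<Rightarrow> 'y option) \<Rightarrow> real" where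
  "Dstar n k F \<theta> = (if \<theta> \<in> Theta n k then
      (\<Sum>\<phi>\<in>{\<phi>\<in>Theta n (k - 1). \<phi> \<subseteq>\<^sub>m \<theta>}. F \<phi>) else 0)"

definition lin_span :: "('a \<Rightarrow> real) set \<Rightarrow> ('a \<Rightarrow> real) set" where
  "lin_span G = {F. \<exists>S c. finite S \<and> S \<subseteq> G \<and> F = (\<lambda>x. \<Sum>g\<in>S. c g * g x)}"

(* types c = (c_0,...,c_m) represented as c :: nat => nat, entries at 0..m *)
definition type_size :: "nat \<Rightarrow> (nat \<Rightarrow> nat) \<Rightarrow> nat" where
  "type_size m c = (\<Sum>i\<le>m. c i)"

definition type_ell :: "nat \<Rightarrow> (nat \<Rightarrow> nat) \<Rightarrow> nat" where
  "type_ell m c = (\<Sum>i\<in>{1..m}. c i)"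

definition fundamental :: "('y::finite \<Rightarrow> 'y \<Rightarrow> real) \<Rightarrow> (nat \<Rightarrow> real) \<Rightarrow> nat \<Rightarrow> (nat \<Rightarrow> nat)
    \<Rightarrow> nat set \<Rightarrow> ((nat \<Rightarrow> 'y option) \<Rightarrow> real) set" where
  "fundamental q lam m c A = {F. \<exists>ix Fj.
      (\<forall>j\<in>A. ix j \<le> m \<and> Fj j \<in> Wsp q lam (ix j)) \<and>
      (\<forall>i\<le>m. card {j\<in>A. ix j = i} = c i) \<and>
      F = (\<lambda>\<theta>. if dom \<theta> = A then (\<Prod>j\<in>A. Fj j (the (\<theta> j))) else 0)}"

(* P_{k,c} = direct sum over k-subsets A of X of P_{k,c,A} = span of fundamental functions *)
definition Pkc :: "nat \<Rightarrow> ('y::finite \<Rightarrow> 'y \<Rightarrow> real) \<Rightarrow> (nat \<Rightarrow> real) \<Rightarrow> nat \<Rightarrow> nat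
    \<Rightarrow> (nat \<Rightarrow> nat) \<Rightarrow> ((nat \<Rightarrow> 'y option) \<Rightarrow> real) set" where
  "Pkc n q lam m k c = lin_span (\<Union>A\<in>{A. A \<subseteq> {1..n} \<and> card A = k}. fundamental q lam m c A)"

definition type_prime :: "(nat \<Rightarrow> nat) \<Rightarrow> nat \<Rightarrow> nat" where
  "type_prime c = c(0 := c 0 - 1)"

(* Pdiff d c k = P_{k+d, c, k}:
   P_{k,c,k} = ker D_{k,c};  P_{h,c,k} = D^*_{h,c}(P_{h-1,c',k}), with P = {0} if c_0 - 1 < 0 *)
fun Pdiff :: "nat \<Rightarrow> ('y::finite \<Rightarrow> 'y \<Rightarrow> real) \<Rightarrow> (nat \<Rightarrow> real) \<Rightarrow> nat \<Rightarrow> nat \<Rightarrow> nat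
    \<Rightarrow> (nat \<Rightarrow> nat) \<Rightarrow> ((nat \<Rightarrow> 'y option) \<Rightarrow> real) set" where
  "Pdiff n q lam m k 0 c = {F \<in> Pkc n q lam m k c. Dop n k F = (\<lambda>_. 0)}"
| "Pdiff n q lam m k (Suc d) c =
     Dstar n (k + Suc d) ` (if c 0 = 0 then {\<lambda>_. 0} else Pdiff n q lam m k d (type_prime c))"

definition Phck :: "nat \<Rightarrow> ('y::finite \<Rightarrow> 'y \<Rightarrow> real) \<Rightarrow> (nat \<Rightarrow> real) \<Rightarrow> nat \<Rightarrow> nat
    \<Rightarrow> (nat \<Rightarrow> nat) \<Rightarrow> nat \<Rightarrow> ((nat \<Rightarrow> 'y option) \<Rightarrow> real) set" where
  "Phck n q lam m h c k = Pdiff n q lam m k (h - k) c"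

end

theory Submission
  imports Defs
begin


lemma Theta_fin: "\<theta> \<in> Theta n t \<Longrightarrow> finite (dom \<theta>)"
  unfolding Theta_def by (auto intro: finite_subset)

lemma sub_set:
  assumes th: "\<theta> \<in> Theta n t" and t: "t \<ge> 1"
  shows "{\<phi>\<in>Theta n (t - 1). \<phi> \<subseteq>\<^sub>m \<theta>} = (\<lambda>j. \<theta>(j:=None)) ` dom \<theta>"
proof (intro set_eqI iffI)
  fix \<phi> assume "\<phi> \<in> {\<phi>\<in>Theta n (t - 1). \<phi> \<subseteq>\<^sub>m \<theta>}"
  hence ph: "\<phi> \<in> Theta n (t - 1)" "\<phi> \<subseteq>\<^sub>m \<theta>" by auto
  have fin: "finite (dom \<theta>)" using Theta_fin th by blast
  have sub: "dom \<phi> \<subseteq> dom \<theta>" using ph(2) map_le_implies_dom_le by blast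
  have c: "card (dom \<phi>) = t - 1" "card (dom \<theta>) = t" using ph th unfolding Theta_def by auto
  have "dom \<phi> \<noteq> dom \<theta>" using c t by auto
  then obtain j where j: "j \<in> dom \<theta>" "j \<notin> dom \<phi>" using sub by blast
  have "dom \<phi> \<subseteq> dom \<theta> - {j}" using sub j by blast
  moreover have "card (dom \<theta> - {j}) = t - 1" using c j fin by simp
  ultimately have eq: "dom \<phi> = dom \<theta> - {j}"
    using fin c by (metis card_subset_eq finite_Diff)
  have "\<phi> = \<theta>(j:=None)"
  proof
    fix x show "\<phi> x = (\<theta>(j:=None)) x"
    proof (cases "x \<in> dom \<phi>")
      case True thus ?thesis using ph(2) eq unfolding map_le_def by auto
    next
      case False
      hence "\<phi> x = None" by (simp add: domIff)
      moreover have "(\<theta>(j:=None)) x = None" using eq False by (auto simp: domIff)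
      ultimately show ?thesis by simp
    qed
  qed
  thus "\<phi> \<in> (\<lambda>j. \<theta>(j:=None)) ` dom \<theta>" using j by blast
next
  fix \<phi> assume "\<phi> \<in> (\<lambda>j. \<theta>(j:=None)) ` dom \<theta>"
  then obtain j where j: "j \<in> dom \<theta>" "\<phi> = \<theta>(j:=None)" by blast
  have fin: "finite (dom \<theta>)" using Theta_fin th by blast
  have "dom \<phi> = dom \<theta> - {j}" using j by auto
  hence "card (dom \<phi>) = t - 1" using th j fin unfolding Theta_def by auto
  moreover have "dom \<phi> \<subseteq> {1..n}" using th j unfolding Theta_def by auto
  moreover have "\<phi> \<subseteq>\<^sub>m \<theta>" using j unfolding map_le_def by auto
  ultimately show "\<phi> \<in> {\<phi>\<in>Theta n (t - 1). \<phi> \<subseteq>\<^sub>m \<theta>}" unfolding Theta_def by auto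
qed

lemma sub_inj: "inj_on (\<lambda>j. \<theta>(j:=None)) (dom \<theta>)"
proof (rule inj_onI)
  fix j j' assume "j \<in> dom \<theta>" "j' \<in> dom \<theta>" "\<theta>(j:=None) = \<theta>(j':=None)"
  thus "j = j'" by (metis domIff fun_upd_apply)
qed

lemma sup_set:
  assumes ph: "\<phi> \<in> Theta n s"
  shows "{\<theta>\<in>Theta n (Suc s). \<phi> \<subseteq>\<^sub>m \<theta>} = (\<lambda>(x,y). \<phi>(x\<mapsto>y)) ` (({1..n} - dom \<phi>) \<times> UNIV)"
proof (intro set_eqI iffI)
  fix \<theta> assume "\<theta> \<in> {\<theta>\<in>Theta n (Suc s). \<phi> \<subseteq>\<^sub>m \<theta>}"
  hence th: "\<theta> \<in> Theta n (Suc s)" "\<phi> \<subseteq>\<^sub>m \<theta>" by auto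
  have fin: "finite (dom \<theta>)" using Theta_fin th by blast
  have sub: "dom \<phi> \<subseteq> dom \<theta>" using th(2) map_le_implies_dom_le by blast
  have c: "card (dom \<phi>) = s" "card (dom \<theta>) = Suc s" using ph th unfolding Theta_def by auto
  have "dom \<phi> \<noteq> dom \<theta>" using c by auto
  then obtain x where x: "x \<in> dom \<theta>" "x \<notin> dom \<phi>" using sub by blast
  have "dom \<theta> - {x} \<supseteq> dom \<phi>" using sub x by blast
  moreover have "card (dom \<theta> - {x}) = s" using c x fin by simp
  ultimately have eq: "dom \<phi> = dom \<theta> - {x}"
    using fin c by (metis card_subset_eq finite_Diff)
  have xn: "x \<in> {1..n}" using th x unfolding Theta_def by auto
  have "\<theta> = \<phi>(x \<mapsto> the (\<theta> x))"
  proof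
    fix z show "\<theta> z = (\<phi>(x \<mapsto> the (\<theta> x))) z"
    proof (cases "z = x")
      case True thus ?thesis using x by auto
    next
      case False
      show ?thesis
      proof (cases "z \<in> dom \<phi>")
        case True thus ?thesis using th(2) False unfolding map_le_def by auto
      next
        case F2: False
        hence "z \<notin> dom \<theta>" using eq False by auto
        thus ?thesis using F2 False by (auto simp: domIff)
      qed
    qed
  qed
  thus "\<theta> \<in> (\<lambda>(x,y). \<phi>(x\<mapsto>y)) ` (({1..n} - dom \<phi>) \<times> UNIV)" using x xn
    by (intro rev_image_eqI[of "(x, the (\<theta> x))"]) auto
next
  fix \<theta> assume "\<theta> \<in> (\<lambda>(x,y). \<phi>(x\<mapsto>y)) ` (({1..n} - dom \<phi>) \<times> UNIV)"
  then obtain p where p: "p \<in> ({1..n} - dom \<phi>) \<times> UNIV" "\<theta> = (\<lambda>(x,y). \<phi>(x\<mapsto>y)) p" by blast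
  obtain x y where pe: "p = (x,y)" by (cases p)
  have xy: "x \<in> {1..n}" "x \<notin> dom \<phi>" "\<theta> = \<phi>(x\<mapsto>y)" using p pe by auto
  have fin: "finite (dom \<phi>)" using Theta_fin ph by blast
  have "dom \<theta> = insert x (dom \<phi>)" using xy by auto
  hence "card (dom \<theta>) = Suc s" "dom \<theta> \<subseteq> {1..n}" using ph xy fin unfolding Theta_def by auto
  moreover have "\<phi> \<subseteq>\<^sub>m \<theta>" using xy unfolding map_le_def by (auto simp: domIff)
  ultimately show "\<theta> \<in> {\<theta>\<in>Theta n (Suc s). \<phi> \<subseteq>\<^sub>m \<theta>}" unfolding Theta_def by auto
qed

lemma sup_inj: "inj_on (\<lambda>(x,y). \<phi>(x\<mapsto>y)) (({1..n} - dom \<phi>) \<times> UNIV)"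
proof (rule inj_onI)
  fix p p' assume p: "p \<in> ({1..n} - dom \<phi>) \<times> UNIV" "p' \<in> ({1..n} - dom \<phi>) \<times> UNIV"
    "(\<lambda>(x,y). \<phi>(x\<mapsto>y)) p = (\<lambda>(x,y). \<phi>(x\<mapsto>y)) p'"
  obtain x y where pe: "p = (x,y)" by (cases p)
  obtain x' y' where pe': "p' = (x',y')" by (cases p')
  have a: "x \<notin> dom \<phi>" "x' \<notin> dom \<phi>" "\<phi>(x \<mapsto> y) = \<phi>(x' \<mapsto> y')" using p pe pe' by auto
  have "(\<phi>(x \<mapsto> y)) x = (\<phi>(x' \<mapsto> y')) x" using a by simp
  hence xx: "x = x'" using a by (metis domIff fun_upd_other fun_upd_same option.distinct(1))
  have "(\<phi>(x \<mapsto> y)) x = (\<phi>(x' \<mapsto> y')) x'" using a xx by simp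
  thus "p = p'" using xx pe pe' by simp
qed

lemma Dstar_expand:
  assumes "\<theta> \<in> Theta n t" "t \<ge> 1"
  shows "Dstar n t G \<theta> = (\<Sum>j\<in>dom \<theta>. G (\<theta>(j:=None)))"
proof -
  have "Dstar n t G \<theta> = sum G ((\<lambda>j. \<theta>(j:=None)) ` dom \<theta>)"
    unfolding Dstar_def using assms sub_set[OF assms] by simp
  also have "\<dots> = (\<Sum>j\<in>dom \<theta>. G (\<theta>(j:=None)))"
    by (subst sum.reindex[OF sub_inj]) simp
  finally show ?thesis .
qed

lemma Dop_expand:
  assumes "\<phi> \<in> Theta n s"
  shows "Dop n (Suc s) F \<phi> = (\<Sum>x\<in>{1..n} - dom \<phi>. \<Sum>y\<in>UNIV. F (\<phi>(x\<mapsto>y)))"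
proof -
  have "Dop n (Suc s) F \<phi> = sum F ((\<lambda>(x,y). \<phi>(x\<mapsto>y)) ` (({1..n} - dom \<phi>) \<times> UNIV))"
    unfolding Dop_def using assms sup_set[OF assms] by simp
  also have "\<dots> = (\<Sum>(x,y)\<in>({1..n} - dom \<phi>) \<times> UNIV. F (\<phi>(x\<mapsto>y)))"
    by (subst sum.reindex[OF sup_inj]) (simp add: case_prod_unfold)
  also have "\<dots> = (\<Sum>x\<in>{1..n} - dom \<phi>. \<Sum>y\<in>UNIV. F (\<phi>(x\<mapsto>y)))"
    by (subst sum.cartesian_product[symmetric]) simp
  finally show ?thesis .
qed



definition Jop :: "((nat \<Rightarrow> 'y::finite option) \<Rightarrow> real) \<Rightarrow> (nat \<Rightarrow> 'y option) \<Rightarrow> real" where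
  "Jop F \<theta> = (\<Sum>j\<in>dom \<theta>. \<Sum>y\<in>UNIV. F (\<theta>(j\<mapsto>y)))"

definition Kop :: "nat \<Rightarrow> ((nat \<Rightarrow> 'y::finite option) \<Rightarrow> real) \<Rightarrow> (nat \<Rightarrow> 'y option) \<Rightarrow> real" where
  "Kop n F \<theta> = (\<Sum>j\<in>dom \<theta>. \<Sum>x\<in>{1..n} - dom \<theta>. \<Sum>y\<in>UNIV. F ((\<theta>(j:=None))(x\<mapsto>y)))"

lemma Theta_del: "\<theta> \<in> Theta n t \<Longrightarrow> j \<in> dom \<theta> \<Longrightarrow> \<theta>(j:=None) \<in> Theta n (t - 1)"
  using Theta_fin[of \<theta> n t] unfolding Theta_def by auto

lemma Theta_ins: "\<phi> \<in> Theta n s \<Longrightarrow> x \<in> {1..n} \<Longrightarrow> x \<notin> dom \<phi> \<Longrightarrow> \<phi>(x\<mapsto>y) \<in> Theta n (Suc s)"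
  using Theta_fin[of \<phi> n s] unfolding Theta_def by auto

lemma DSD:
  fixes F :: "(nat \<Rightarrow> 'y::finite option) \<Rightarrow> real"
  assumes th: "\<theta> \<in> Theta n t"
  shows "Dstar n t (Dop n t F) \<theta> = Jop F \<theta> + Kop n F \<theta>"
proof (cases t)
  case 0
  hence "dom \<theta> = {}" using th Theta_fin[OF th] unfolding Theta_def by auto
  moreover have "Dop n 0 F = (\<lambda>_. 0)" unfolding Dop_def by auto
  ultimately show ?thesis using 0 unfolding Dstar_def Jop_def Kop_def by simp
next
  case (Suc s)
  have "Dstar n t (Dop n t F) \<theta> = (\<Sum>j\<in>dom \<theta>. Dop n (Suc s) F (\<theta>(j:=None)))"
    using Dstar_expand[OF th] Suc by simp
  also have "\<dots> = (\<Sum>j\<in>dom \<theta>. (\<Sum>y\<in>UNIV. F (\<theta>(j\<mapsto>y))) +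
       (\<Sum>x\<in>{1..n} - dom \<theta>. \<Sum>y\<in>UNIV. F ((\<theta>(j:=None))(x\<mapsto>y))))"
  proof (rule sum.cong[OF refl])
    fix j assume j: "j \<in> dom \<theta>"
    have m: "\<theta>(j:=None) \<in> Theta n s" using Theta_del[OF th j] Suc by simp
    have jn: "j \<in> {1..n}" using th j unfolding Theta_def by auto
    have e: "{1..n} - dom (\<theta>(j:=None)) = insert j ({1..n} - dom \<theta>)" using jn j by auto
    show "Dop n (Suc s) F (\<theta>(j:=None)) = (\<Sum>y\<in>UNIV. F (\<theta>(j\<mapsto>y))) +
       (\<Sum>x\<in>{1..n} - dom \<theta>. \<Sum>y\<in>UNIV. F ((\<theta>(j:=None))(x\<mapsto>y)))"
      unfolding Dop_expand[OF m] e using j by (subst sum.insert) auto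
  qed
  also have "\<dots> = Jop F \<theta> + Kop n F \<theta>"
    unfolding Jop_def Kop_def sum.distrib ..
  finally show ?thesis .
qed

lemma DDS:
  fixes G :: "(nat \<Rightarrow> 'y::finite option) \<Rightarrow> real"
  assumes ph: "\<phi> \<in> Theta n s"
  shows "Dop n (Suc s) (Dstar n (Suc s) G) \<phi> =
     real (n - s) * real CARD('y) * G \<phi> + Kop n G \<phi>"
proof -
  have fin: "finite (dom \<phi>)" using Theta_fin[OF ph] .
  have sub: "dom \<phi> \<subseteq> {1..n}" "card (dom \<phi>) = s" using ph unfolding Theta_def by auto
  have "Dop n (Suc s) (Dstar n (Suc s) G) \<phi> =
     (\<Sum>x\<in>{1..n} - dom \<phi>. \<Sum>y\<in>UNIV. G \<phi> + (\<Sum>j\<in>dom \<phi>. G ((\<phi>(j:=None))(x\<mapsto>y))))"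
    unfolding Dop_expand[OF ph]
  proof (intro sum.cong refl)
    fix x y assume x: "x \<in> {1..n} - dom \<phi>"
    have m: "\<phi>(x\<mapsto>y) \<in> Theta n (Suc s)" using Theta_ins[OF ph] x by auto
    have d: "dom (\<phi>(x\<mapsto>y)) = insert x (dom \<phi>)" by auto
    have "Dstar n (Suc s) G (\<phi>(x\<mapsto>y)) = (\<Sum>j\<in>insert x (dom \<phi>). G ((\<phi>(x\<mapsto>y))(j:=None)))"
      using Dstar_expand[OF m] d by simp
    also have "\<dots> = G ((\<phi>(x\<mapsto>y))(x:=None)) + (\<Sum>j\<in>dom \<phi>. G ((\<phi>(x\<mapsto>y))(j:=None)))"
      using x fin by (subst sum.insert) auto
    also have "(\<phi>(x\<mapsto>y))(x:=None) = \<phi>" using x by (auto simp: domIff)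
    also have "(\<Sum>j\<in>dom \<phi>. G ((\<phi>(x\<mapsto>y))(j:=None))) = (\<Sum>j\<in>dom \<phi>. G ((\<phi>(j:=None))(x\<mapsto>y)))"
    proof (rule sum.cong[OF refl])
      fix j assume "j \<in> dom \<phi>"
      hence "j \<noteq> x" using x by auto
      thus "G ((\<phi>(x\<mapsto>y))(j:=None)) = G ((\<phi>(j:=None))(x\<mapsto>y))" by (simp add: fun_upd_twist)
    qed
    finally show "Dstar n (Suc s) G (\<phi>(x\<mapsto>y)) = G \<phi> + (\<Sum>j\<in>dom \<phi>. G ((\<phi>(j:=None))(x\<mapsto>y)))" .
  qed
  also have "\<dots> = real (card ({1..n} - dom \<phi>)) * real CARD('y) * G \<phi> +
      (\<Sum>x\<in>{1..n} - dom \<phi>. \<Sum>y\<in>UNIV. \<Sum>j\<in>dom \<phi>. G ((\<phi>(j:=None))(x\<mapsto>y)))"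
    by (simp add: sum.distrib)
  also have "(\<Sum>x\<in>{1..n} - dom \<phi>. \<Sum>y\<in>UNIV. \<Sum>j\<in>dom \<phi>. G ((\<phi>(j:=None))(x\<mapsto>y))) = Kop n G \<phi>"
    unfolding Kop_def
    apply (subst sum.swap)
    apply (subst sum.swap[where A="{1..n} - dom \<phi>" and B="dom \<phi>"])
    apply simp
    done
  also have "card ({1..n} - dom \<phi>) = n - s" using sub fin by (simp add: card_Diff_subset)
  finally show ?thesis .
qed



lemma Delta_set:
  assumes th: "\<theta> \<in> Theta n h" and h: "h \<ge> 1"
  shows "{\<phi>\<in>Theta n h. card (dom \<phi> \<inter> dom \<theta>) = h - 1 \<and> (\<forall>x\<in>dom \<phi> \<inter> dom \<theta>. \<phi> x = \<theta> x)}
    = (\<lambda>(j,x,y). (\<theta>(j:=None))(x\<mapsto>y)) ` (dom \<theta> \<times> (({1..n} - dom \<theta>) \<times> UNIV))"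
    (is "?L = ?R")
proof (intro set_eqI iffI)
  have fin: "finite (dom \<theta>)" using Theta_fin[OF th] .
  have ct: "card (dom \<theta>) = h" "dom \<theta> \<subseteq> {1..n}" using th unfolding Theta_def by auto
  fix \<phi> assume "\<phi> \<in> ?L"
  hence ph: "\<phi> \<in> Theta n h" "card (dom \<phi> \<inter> dom \<theta>) = h - 1" "\<forall>x\<in>dom \<phi> \<inter> dom \<theta>. \<phi> x = \<theta> x"
    by auto
  have finp: "finite (dom \<phi>)" using Theta_fin[OF ph(1)] .
  have cp: "card (dom \<phi>) = h" "dom \<phi> \<subseteq> {1..n}" using ph unfolding Theta_def by auto
  define I where "I = dom \<phi> \<inter> dom \<theta>"
  have "I \<noteq> dom \<theta>" using ph(2) ct h unfolding I_def by auto
  then obtain j where j: "j \<in> dom \<theta>" "j \<notin> I" unfolding I_def by blast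
  have "I \<noteq> dom \<phi>" using ph(2) cp h unfolding I_def by auto
  then obtain x where x: "x \<in> dom \<phi>" "x \<notin> I" unfolding I_def by blast
  have xt: "x \<notin> dom \<theta>" using x unfolding I_def by auto
  have "I \<subseteq> dom \<theta> - {j}" using j unfolding I_def by auto
  moreover have "card (dom \<theta> - {j}) = h - 1" using ct j fin by simp
  ultimately have eqt: "I = dom \<theta> - {j}" using ph(2) fin unfolding I_def
    by (metis card_subset_eq finite_Diff)
  have "I \<subseteq> dom \<phi> - {x}" using x unfolding I_def by auto
  moreover have "card (dom \<phi> - {x}) = h - 1" using cp x finp by simp
  ultimately have eqp: "I = dom \<phi> - {x}" using ph(2) finp unfolding I_def
    by (metis card_subset_eq finite_Diff)
  have "\<phi> = (\<theta>(j:=None))(x \<mapsto> the (\<phi> x))"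
  proof
    fix z show "\<phi> z = ((\<theta>(j:=None))(x \<mapsto> the (\<phi> x))) z"
    proof (cases "z = x")
      case True thus ?thesis using x by auto
    next
      case False
      show ?thesis
      proof (cases "z \<in> I")
        case True
        hence "z \<noteq> j" using j by auto
        thus ?thesis using True False ph(3) unfolding I_def by auto
      next
        case zI: False
        hence "z \<notin> dom \<phi>" using eqp False by auto
        moreover have "z = j \<or> z \<notin> dom \<theta>" using eqt zI by auto
        ultimately show ?thesis using False by (auto simp: domIff)
      qed
    qed
  qed
  moreover have "x \<in> {1..n}" using x cp by auto
  ultimately show "\<phi> \<in> ?R" using j xt
    by (intro rev_image_eqI[of "(j, x, the (\<phi> x))"]) auto
next
  have fin: "finite (dom \<theta>)" using Theta_fin[OF th] .
  have ct: "card (dom \<theta>) = h" "dom \<theta> \<subseteq> {1..n}" using th unfolding Theta_def by auto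
  fix \<phi> assume "\<phi> \<in> ?R"
  then obtain p where p: "p \<in> dom \<theta> \<times> (({1..n} - dom \<theta>) \<times> UNIV)"
     "\<phi> = (\<lambda>(j,x,y). (\<theta>(j:=None))(x\<mapsto>y)) p" by blast
  obtain j x y where pe: "p = (j,x,y)" by (cases p) auto
  have jxy: "j \<in> dom \<theta>" "x \<in> {1..n}" "x \<notin> dom \<theta>" "\<phi> = (\<theta>(j:=None))(x\<mapsto>y)"
    using p pe by auto
  have d: "dom \<phi> = insert x (dom \<theta> - {j})" using jxy by auto
  have i: "dom \<phi> \<inter> dom \<theta> = dom \<theta> - {j}" using jxy d by auto
  have "card (dom \<phi>) = h" using d jxy fin ct h by (simp add: card_insert_if)
  moreover have "dom \<phi> \<subseteq> {1..n}" using d ct jxy by auto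
  moreover have "card (dom \<phi> \<inter> dom \<theta>) = h - 1" using i ct jxy fin by simp
  moreover have "\<forall>z\<in>dom \<phi> \<inter> dom \<theta>. \<phi> z = \<theta> z" using i jxy by auto
  ultimately show "\<phi> \<in> ?L" unfolding Theta_def by auto
qed

lemma Delta_inj:
  assumes "x0 = x0"
  shows "inj_on (\<lambda>(j,x,y). (\<theta>(j:=None))(x\<mapsto>y)) (dom \<theta> \<times> (({1..n} - dom \<theta>) \<times> (UNIV::'y set)))"
proof (rule inj_onI)
  fix p p' assume p: "p \<in> dom \<theta> \<times> (({1..n} - dom \<theta>) \<times> (UNIV::'y set))"
     "p' \<in> dom \<theta> \<times> (({1..n} - dom \<theta>) \<times> (UNIV::'y set))"
    "(\<lambda>(j,x,y). (\<theta>(j:=None))(x\<mapsto>y)) p = (\<lambda>(j,x,y). (\<theta>(j:=None))(x\<mapsto>y)) p'"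
  obtain j x y where pe: "p = (j,x,y)" by (cases p) auto
  obtain j' x' y' where pe': "p' = (j',x',y')" by (cases p') auto
  have a: "j \<in> dom \<theta>" "j' \<in> dom \<theta>" "x \<notin> dom \<theta>" "x' \<notin> dom \<theta>"
    "(\<theta>(j:=None))(x\<mapsto>y) = (\<theta>(j':=None))(x'\<mapsto>y')" using p pe pe' by auto
  have e: "Some y = ((\<theta>(j':=None))(x'\<mapsto>y')) x" using a(5) by (metis fun_upd_same)
  hence xx: "x = x'" using a(3) by (cases "x = x'") (auto simp: domIff split: if_splits)
  hence yy: "y = y'" using a
    by (metis fun_upd_same option.inject)
  have jx: "j \<noteq> x" "j \<noteq> x'" using a by auto
  have e2: "None = ((\<theta>(j':=None))(x'\<mapsto>y')) j" using a(5) jx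
    by (metis fun_upd_other fun_upd_same)
  have jj: "j = j'" using e2 jx a(1) by (cases "j = j'") (auto simp: domIff)
  show "p = p'" using pe pe' xx yy jj by simp
qed

lemma Delta_K:
  fixes F :: "(nat \<Rightarrow> 'y::finite option) \<Rightarrow> real"
  assumes th: "\<theta> \<in> Theta n h" and h: "h \<ge> 1"
  shows "Deltaop n h F \<theta> = Kop n F \<theta>"
proof -
  have "Deltaop n h F \<theta> = sum F ((\<lambda>(j,x,y). (\<theta>(j:=None))(x\<mapsto>y)) ` (dom \<theta> \<times> (({1..n} - dom \<theta>) \<times> (UNIV::'y set))))"
    unfolding Deltaop_def using th Delta_set[OF th h] by simp
  also have "\<dots> = (\<Sum>(j,x,y)\<in>dom \<theta> \<times> (({1..n} - dom \<theta>) \<times> (UNIV::'y set)). F ((\<theta>(j:=None))(x\<mapsto>y)))"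
    by (subst sum.reindex[OF Delta_inj]) (auto simp: case_prod_unfold)
  also have "\<dots> = Kop n F \<theta>"
    unfolding Kop_def sum.cartesian_product[symmetric] by (simp add: case_prod_unfold)
  finally show ?thesis .
qed



lemma W_sum_zero:
  fixes q :: "'y::finite \<Rightarrow> 'y \<Rightarrow> real"
  assumes q: "stochastic_sym_irred q" and l0: "lam 0 = 1" and inj: "inj_on lam {0..m}"
    and i: "i \<le> m" "i \<noteq> 0" and f: "f \<in> Wsp q lam i"
  shows "(\<Sum>y\<in>UNIV. f y) = 0"
proof -
  have rs: "\<And>y. (\<Sum>y'\<in>UNIV. q y y') = 1" and sym: "\<And>y y'. q y y' = q y' y"
    using q unfolding stochastic_sym_irred_def by auto
  have "(\<Sum>y\<in>UNIV. Qop q f y) = (\<Sum>y\<in>UNIV. \<Sum>y'\<in>UNIV. q y y' * f y')" unfolding Qop_def ..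
  also have "\<dots> = (\<Sum>y'\<in>UNIV. \<Sum>y\<in>UNIV. q y y' * f y')" by (rule sum.swap)
  also have "\<dots> = (\<Sum>y'\<in>UNIV. (\<Sum>y\<in>UNIV. q y' y) * f y')"
  proof (rule sum.cong[OF refl])
    fix y' show "(\<Sum>y\<in>UNIV. q y y' * f y') = (\<Sum>y\<in>UNIV. q y' y) * f y'"
      unfolding sum_distrib_right using sym[of _ y'] by (metis (no_types, lifting))
  qed
  also have "\<dots> = (\<Sum>y'\<in>UNIV. f y')" using rs by simp
  finally have e1: "(\<Sum>y\<in>UNIV. Qop q f y) = (\<Sum>y\<in>UNIV. f y)" .
  have "Qop q f = (\<lambda>y. lam i * f y)" using f unfolding Wsp_def by auto
  hence "(\<Sum>y\<in>UNIV. Qop q f y) = lam i * (\<Sum>y\<in>UNIV. f y)" by (simp add: sum_distrib_left)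
  moreover have "lam i \<noteq> 1" using inj i l0 unfolding inj_on_def by (metis atLeastAtMost_iff le0)
  ultimately show ?thesis using e1 by (metis mult_cancel_right1)
qed

lemma W_const:
  fixes q :: "'y::finite \<Rightarrow> 'y \<Rightarrow> real"
  assumes q: "stochastic_sym_irred q" and l0: "lam 0 = 1" and f: "f \<in> Wsp q lam 0"
  shows "f y = f y'"
proof -
  have rs: "\<And>y. (\<Sum>y'\<in>UNIV. q y y') = 1" and nn: "\<And>y y'. q y y' \<ge> 0"
    and irr: "\<And>y y'. (y, y') \<in> {(a, b). q a b > 0}\<^sup>*"
    using q unfolding stochastic_sym_irred_def by auto
  have Qf: "\<And>y. (\<Sum>z\<in>UNIV. q y z * f z) = f y"
    using f l0 unfolding Wsp_def Qop_def by (auto dest: fun_cong)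
  define M where "M = Max (range f)"
  have le: "\<And>z. f z \<le> M" unfolding M_def by simp
  have "M \<in> range f" unfolding M_def by (rule Max_in) auto
  then obtain y0 where y0: "f y0 = M" by auto
  have step: "f b = M" if "f a = M" "q a b > 0" for a b
  proof -
    have "(\<Sum>z\<in>UNIV. q a z * (M - f z)) = M * (\<Sum>z\<in>UNIV. q a z) - (\<Sum>z\<in>UNIV. q a z * f z)"
      unfolding right_diff_distrib sum_subtractf sum_distrib_left by (simp add: mult.commute)
    also have "\<dots> = 0" using rs Qf that(1) by simp
    finally have "(\<Sum>z\<in>UNIV. q a z * (M - f z)) = 0" .
    moreover have "\<forall>z\<in>UNIV. q a z * (M - f z) \<ge> 0" using nn le by simp
    ultimately have "q a b * (M - f b) = 0" using sum_nonneg_eq_0_iff[of UNIV "\<lambda>z. q a z * (M - f z)"] by simp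
    thus ?thesis using that(2) by simp
  qed
  have all: "f z = M" for z
  proof -
    have "(y0, z) \<in> {(a, b). q a b > 0}\<^sup>*" by (rule irr)
    thus ?thesis
    proof (induction rule: rtrancl_induct)
      case base thus ?case using y0 .
    next
      case (step b c) thus ?case using \<open>\<And>a b. f a = M \<Longrightarrow> q a b > 0 \<Longrightarrow> f b = M\<close> by auto
    qed
  qed
  show ?thesis using all by simp
qed

lemma const_W0:
  fixes q :: "'y::finite \<Rightarrow> 'y \<Rightarrow> real"
  assumes q: "stochastic_sym_irred q" and l0: "lam 0 = 1"
  shows "(\<lambda>_. 1) \<in> Wsp q lam 0"
  using q l0 unfolding Wsp_def Qop_def stochastic_sym_irred_def by auto

lemma lin_span_zero: "(\<lambda>_. 0) \<in> lin_span G"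
  unfolding lin_span_def by (rule CollectI, rule exI[of _ "{}"]) auto

lemma lin_span_base: "g \<in> G \<Longrightarrow> g \<in> lin_span G"
  unfolding lin_span_def by (rule CollectI, rule exI[of _ "{g}"], rule exI[of _ "\<lambda>_. 1"]) auto

lemma lin_span_scale: "F \<in> lin_span G \<Longrightarrow> (\<lambda>x. r * F x) \<in> lin_span G"
proof -
  assume "F \<in> lin_span G"
  then obtain S c where S: "finite S" "S \<subseteq> G" "F = (\<lambda>x. \<Sum>g\<in>S. c g * g x)"
    unfolding lin_span_def by blast
  show ?thesis unfolding lin_span_def
    by (rule CollectI, rule exI[of _ S], rule exI[of _ "\<lambda>g. r * c g"])
       (simp add: S sum_distrib_left mult.assoc)
qed

lemma lin_span_add: "F1 \<in> lin_span G \<Longrightarrow> F2 \<in> lin_span G \<Longrightarrow> (\<lambda>x. F1 x + F2 x) \<in> lin_span G"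
proof -
  assume "F1 \<in> lin_span G" "F2 \<in> lin_span G"
  then obtain S1 c1 S2 c2 where S: "finite S1" "S1 \<subseteq> G" "F1 = (\<lambda>x. \<Sum>g\<in>S1. c1 g * g x)"
     "finite S2" "S2 \<subseteq> G" "F2 = (\<lambda>x. \<Sum>g\<in>S2. c2 g * g x)"
    unfolding lin_span_def by blast
  define c where "c g = (if g \<in> S1 then c1 g else 0) + (if g \<in> S2 then c2 g else 0)" for g
  have e1: "(\<Sum>g\<in>S1 \<union> S2. (if g \<in> S1 then c1 g else 0) * g x) = (\<Sum>g\<in>S1. c1 g * g x)" for x
    by (rule sum.mono_neutral_cong_right) (use S in auto)
  have e2: "(\<Sum>g\<in>S1 \<union> S2. (if g \<in> S2 then c2 g else 0) * g x) = (\<Sum>g\<in>S2. c2 g * g x)" for x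
    by (rule sum.mono_neutral_cong_right) (use S in auto)
  have "(\<lambda>x. F1 x + F2 x) = (\<lambda>x. \<Sum>g\<in>S1 \<union> S2. c g * g x)"
  proof
    fix x
    have "(\<Sum>g\<in>S1 \<union> S2. c g * g x) = (\<Sum>g\<in>S1 \<union> S2. (if g \<in> S1 then c1 g else 0) * g x
       + (if g \<in> S2 then c2 g else 0) * g x)"
      unfolding c_def by (rule sum.cong[OF refl]) (simp only: distrib_right)
    also have "\<dots> = F1 x + F2 x" unfolding sum.distrib e1 e2 S(3,6) ..
    finally show "F1 x + F2 x = (\<Sum>g\<in>S1 \<union> S2. c g * g x)" ..
  qed
  thus ?thesis unfolding lin_span_def using S by blast
qed

lemma lin_span_sum:
  assumes "finite I" "\<forall>i\<in>I. f i \<in> lin_span G"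
  shows "(\<lambda>x. \<Sum>i\<in>I. c i * f i x) \<in> lin_span G"
  using assms
proof (induction I rule: finite_induct)
  case empty thus ?case using lin_span_zero by simp
next
  case (insert i I)
  have "(\<lambda>x. \<Sum>i\<in>insert i I. c i * f i x) = (\<lambda>x. c i * f i x + (\<Sum>i\<in>I. c i * f i x))"
    using insert by simp
  moreover have "(\<lambda>x. c i * f i x) \<in> lin_span G" using insert.prems by (intro lin_span_scale) auto
  moreover have "(\<lambda>x. \<Sum>i\<in>I. c i * f i x) \<in> lin_span G" using insert.IH insert.prems by auto
  ultimately show ?case using lin_span_add[of "\<lambda>x. c i * f i x" G "\<lambda>x. \<Sum>i\<in>I. c i * f i x"] by simp
qed



lemma prod_upd:
  assumes "j \<in> A" "finite A"
  shows "(\<Prod>i\<in>A. Fj i (the ((\<theta>(j\<mapsto>y)) i))) = Fj j y * (\<Prod>i\<in>A - {j}. Fj i (the (\<theta> i)))"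
proof -
  have "(\<Prod>i\<in>A. Fj i (the ((\<theta>(j\<mapsto>y)) i))) = Fj j y * (\<Prod>i\<in>A - {j}. Fj i (the ((\<theta>(j\<mapsto>y)) i)))"
    using assms by (subst prod.remove[of A j]) auto
  also have "(\<Prod>i\<in>A - {j}. Fj i (the ((\<theta>(j\<mapsto>y)) i))) = (\<Prod>i\<in>A - {j}. Fj i (the (\<theta> i)))"
    by (rule prod.cong) auto
  finally show ?thesis .
qed

lemma prod_rem:
  assumes "j \<in> A" "finite A"
  shows "(\<Prod>i\<in>A. Fj i (the (\<theta> i))) = Fj j (the (\<theta> j)) * (\<Prod>i\<in>A - {j}. Fj i (the (\<theta> i)))"
  using assms by (subst prod.remove[of A j]) auto

lemma sum_if_card:
  assumes "finite A"
  shows "(\<Sum>j\<in>A. if P j then (r::real) else 0) = real (card {j\<in>A. P j}) * r"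
  using assms by (simp add: sum.inter_filter[symmetric])

lemma J_fund:
  fixes q :: "'y::finite \<Rightarrow> 'y \<Rightarrow> real"
  assumes q: "stochastic_sym_irred q" and l0: "lam 0 = 1" and inj: "inj_on lam {0..m}"
    and g: "g \<in> fundamental q lam m c A" and fin: "finite A"
  shows "Jop g \<theta> = real CARD('y) * real (c 0) * g \<theta>"
proof -
  obtain ix Fj where h: "\<forall>j\<in>A. ix j \<le> m \<and> Fj j \<in> Wsp q lam (ix j)"
    "\<forall>i\<le>m. card {j\<in>A. ix j = i} = c i"
    "g = (\<lambda>\<theta>. if dom \<theta> = A then (\<Prod>j\<in>A. Fj j (the (\<theta> j))) else 0)"
    using g unfolding fundamental_def by blast
  show ?thesis
  proof (cases "dom \<theta> = A")
    case False
    have "Jop g \<theta> = 0" unfolding Jop_def h(3)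
      by (rule sum.neutral, rule ballI, rule sum.neutral) (use False in auto)
    thus ?thesis using False h(3) by simp
  next
    case True
    have "Jop g \<theta> = (\<Sum>j\<in>A. if ix j = 0 then real CARD('y) * g \<theta> else 0)"
      unfolding Jop_def True
    proof (rule sum.cong[OF refl])
      fix j assume j: "j \<in> A"
      have dj: "dom (\<theta>(j\<mapsto>y)) = A" for y using True j by auto
      have "(\<Sum>y\<in>UNIV. g (\<theta>(j\<mapsto>y))) = (\<Sum>y\<in>UNIV. Fj j y * (\<Prod>i\<in>A - {j}. Fj i (the (\<theta> i))))"
        unfolding h(3) by (rule sum.cong[OF refl]) (simp only: dj prod_upd[OF j fin] refl if_True)
      also have "\<dots> = (\<Sum>y\<in>UNIV. Fj j y) * (\<Prod>i\<in>A - {j}. Fj i (the (\<theta> i)))"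
        by (simp add: sum_distrib_right)
      also have "\<dots> = (if ix j = 0 then real CARD('y) * g \<theta> else 0)"
      proof (cases "ix j = 0")
        case True
        have W: "Fj j \<in> Wsp q lam 0" using h(1) j True by auto
        have "(\<Sum>y\<in>UNIV. Fj j y) = (\<Sum>y\<in>(UNIV::'y set). Fj j (the (\<theta> j)))"
        proof -
          have "\<forall>y. Fj j y = Fj j (the (\<theta> j))" using W_const[OF q l0 W] by blast
          hence "Fj j = (\<lambda>y. Fj j (the (\<theta> j)))" by (intro ext) blast
          thus ?thesis by (metis (no_types))
        qed
        hence "(\<Sum>y\<in>UNIV. Fj j y) = real CARD('y) * Fj j (the (\<theta> j))" by simp
        moreover have "g \<theta> = Fj j (the (\<theta> j)) * (\<Prod>i\<in>A - {j}. Fj i (the (\<theta> i)))"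
          unfolding h(3) using \<open>dom \<theta> = A\<close> prod_rem[OF j fin] by simp
        ultimately show ?thesis using True by simp
      next
        case False
        have "(\<Sum>y\<in>UNIV. Fj j y) = 0" using W_sum_zero[OF q l0 inj _ False] h(1) j by auto
        thus ?thesis using False by simp
      qed
      finally show "(\<Sum>y\<in>UNIV. g (\<theta>(j\<mapsto>y))) = (if ix j = 0 then real CARD('y) * g \<theta> else 0)" .
    qed
    also have "\<dots> = real (card {j\<in>A. ix j = 0}) * (real CARD('y) * g \<theta>)"
      by (rule sum_if_card[OF fin])
    also have "card {j\<in>A. ix j = 0} = c 0" using h(2) by auto
    finally show ?thesis by simp
  qed
qed

definition Mraw :: "('y::finite \<Rightarrow> 'y \<Rightarrow> real) \<Rightarrow> ((nat \<Rightarrow> 'y option) \<Rightarrow> real) \<Rightarrow> (nat \<Rightarrow> 'y option) \<Rightarrow> real" where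
  "Mraw q F \<theta> = (\<Sum>j\<in>dom \<theta>. \<Sum>y\<in>UNIV. q (the (\<theta> j)) y * F (\<theta>(j \<mapsto> y)))"

lemma M_fund:
  fixes q :: "'y::finite \<Rightarrow> 'y \<Rightarrow> real"
  assumes g: "g \<in> fundamental q lam m c A" and fin: "finite A"
  shows "Mraw q g \<theta> = (\<Sum>i\<le>m. real (c i) * lam i) * g \<theta>"
proof -
  obtain ix Fj where h: "\<forall>j\<in>A. ix j \<le> m \<and> Fj j \<in> Wsp q lam (ix j)"
    "\<forall>i\<le>m. card {j\<in>A. ix j = i} = c i"
    "g = (\<lambda>\<theta>. if dom \<theta> = A then (\<Prod>j\<in>A. Fj j (the (\<theta> j))) else 0)"
    using g unfolding fundamental_def by blast
  show ?thesis
  proof (cases "dom \<theta> = A")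
    case False
    have "Mraw q g \<theta> = 0" unfolding Mraw_def h(3)
      by (rule sum.neutral, rule ballI, rule sum.neutral) (use False in auto)
    thus ?thesis using False h(3) by simp
  next
    case True
    have "Mraw q g \<theta> = (\<Sum>j\<in>A. lam (ix j) * g \<theta>)"
      unfolding Mraw_def True
    proof (rule sum.cong[OF refl])
      fix j assume j: "j \<in> A"
      have dj: "dom (\<theta>(j\<mapsto>y)) = A" for y using True j by auto
      have "(\<Sum>y\<in>UNIV. q (the (\<theta> j)) y * g (\<theta>(j\<mapsto>y))) =
          (\<Sum>y\<in>UNIV. q (the (\<theta> j)) y * (Fj j y * (\<Prod>i\<in>A - {j}. Fj i (the (\<theta> i)))))"
        unfolding h(3) by (rule sum.cong[OF refl]) (simp only: dj prod_upd[OF j fin] refl if_True)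
      also have "\<dots> = Qop q (Fj j) (the (\<theta> j)) * (\<Prod>i\<in>A - {j}. Fj i (the (\<theta> i)))"
        unfolding Qop_def by (simp add: sum_distrib_right mult.assoc)
      also have "Qop q (Fj j) = (\<lambda>y. lam (ix j) * Fj j y)" using h(1) j unfolding Wsp_def by auto
      also have "g \<theta> = Fj j (the (\<theta> j)) * (\<Prod>i\<in>A - {j}. Fj i (the (\<theta> i)))"
          unfolding h(3) using \<open>dom \<theta> = A\<close> prod_rem[OF j fin] by simp
      ultimately show "(\<Sum>y\<in>UNIV. q (the (\<theta> j)) y * g (\<theta>(j\<mapsto>y))) = lam (ix j) * g \<theta>"
        by (metis mult.assoc)
    qed
    also have "\<dots> = (\<Sum>j\<in>A. lam (ix j)) * g \<theta>" by (simp add: sum_distrib_right)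
    also have "(\<Sum>j\<in>A. lam (ix j)) = (\<Sum>i\<le>m. \<Sum>j\<in>{j\<in>A. ix j = i}. lam (ix j))"
      by (rule sum.group[symmetric]) (use fin h(1) in auto)
    also have "\<dots> = (\<Sum>i\<le>m. real (c i) * lam i)"
      by (rule sum.cong[OF refl]) (use h(2) in simp)
    finally show ?thesis .
  qed
qed

lemma J_lin: "Jop (\<lambda>\<theta>. \<Sum>g\<in>S. c g * g \<theta>) \<theta> = (\<Sum>g\<in>S. c g * Jop g \<theta>)"
  unfolding Jop_def sum_distrib_left
  by (subst sum.swap, rule sum.cong[OF refl], subst sum.swap, rule refl)

lemma M_lin: "Mraw q (\<lambda>\<theta>. \<Sum>g\<in>S. c g * g \<theta>) \<theta> = (\<Sum>g\<in>S. c g * Mraw q g \<theta>)"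
  unfolding Mraw_def sum_distrib_left
  by (subst sum.swap, rule sum.cong[OF refl], subst sum.swap, simp add: algebra_simps)

lemma Dstar_lin: "Dstar n t (\<lambda>\<theta>. \<Sum>g\<in>S. c g * g \<theta>) \<theta> = (\<Sum>g\<in>S. c g * Dstar n t g \<theta>)"
proof (cases "\<theta> \<in> Theta n t")
  case True
  show ?thesis unfolding Dstar_def using True
    by (simp add: sum_distrib_left) (rule sum.swap)
qed (simp add: Dstar_def)



lemma Pkc_obtain:
  assumes "F \<in> Pkc n q lam m t c"
  obtains S cc where "finite S" "\<forall>g\<in>S. \<exists>A. A \<subseteq> {1..n} \<and> card A = t \<and> g \<in> fundamental q lam m c A"
    "F = (\<lambda>x. \<Sum>g\<in>S. cc g * g x)"
proof -
  from assms obtain S cc where "finite S" "S \<subseteq> (\<Union>A\<in>{A. A \<subseteq> {1..n} \<and> card A = t}. fundamental q lam m c A)"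
    "F = (\<lambda>x. \<Sum>g\<in>S. cc g * g x)" unfolding Pkc_def lin_span_def by auto
  moreover have "\<forall>g\<in>S. \<exists>A. A \<subseteq> {1..n} \<and> card A = t \<and> g \<in> fundamental q lam m c A"
    using calculation(2) by blast
  ultimately show ?thesis using that by blast
qed

lemma J_Pkc:
  fixes q :: "'y::finite \<Rightarrow> 'y \<Rightarrow> real"
  assumes q: "stochastic_sym_irred q" and l0: "lam 0 = 1" and inj: "inj_on lam {0..m}"
    and F: "F \<in> Pkc n q lam m t c"
  shows "Jop F \<theta> = real CARD('y) * real (c 0) * F \<theta>"
proof -
  obtain S cc where S: "finite S" "\<forall>g\<in>S. \<exists>A. A \<subseteq> {1..n} \<and> card A = t \<and> g \<in> fundamental q lam m c A"
    "F = (\<lambda>x. \<Sum>g\<in>S. cc g * g x)" using Pkc_obtain[OF F] by blast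
  have "Jop F \<theta> = (\<Sum>g\<in>S. cc g * Jop g \<theta>)" unfolding S(3) by (rule J_lin)
  also have "\<dots> = (\<Sum>g\<in>S. cc g * (real CARD('y) * real (c 0) * g \<theta>))"
  proof (rule sum.cong[OF refl])
    fix g assume "g \<in> S"
    then obtain A where A: "A \<subseteq> {1..n}" "g \<in> fundamental q lam m c A" using S(2) by blast
    have "finite A" using A(1) finite_subset by blast
    thus "cc g * Jop g \<theta> = cc g * (real CARD('y) * real (c 0) * g \<theta>)"
      using J_fund[OF q l0 inj A(2)] by simp
  qed
  also have "\<dots> = real CARD('y) * real (c 0) * F \<theta>"
    unfolding S(3) sum_distrib_left by (intro sum.cong refl) (simp only: mult_ac)
  finally show ?thesis .
qed

lemma M_Pkc:
  fixes q :: "'y::finite \<Rightarrow> 'y \<Rightarrow> real"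
  assumes F: "F \<in> Pkc n q lam m t c"
  shows "Mraw q F \<theta> = (\<Sum>i\<le>m. real (c i) * lam i) * F \<theta>"
proof -
  obtain S cc where S: "finite S" "\<forall>g\<in>S. \<exists>A. A \<subseteq> {1..n} \<and> card A = t \<and> g \<in> fundamental q lam m c A"
    "F = (\<lambda>x. \<Sum>g\<in>S. cc g * g x)" using Pkc_obtain[OF F] by blast
  have "Mraw q F \<theta> = (\<Sum>g\<in>S. cc g * Mraw q g \<theta>)" unfolding S(3) by (rule M_lin)
  also have "\<dots> = (\<Sum>g\<in>S. cc g * ((\<Sum>i\<le>m. real (c i) * lam i) * g \<theta>))"
  proof (rule sum.cong[OF refl])
    fix g assume "g \<in> S"
    then obtain A where A: "A \<subseteq> {1..n}" "g \<in> fundamental q lam m c A" using S(2) by blast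
    have "finite A" using A(1) finite_subset by blast
    thus "cc g * Mraw q g \<theta> = cc g * ((\<Sum>i\<le>m. real (c i) * lam i) * g \<theta>)"
      using M_fund[OF A(2)] by simp
  qed
  also have "\<dots> = (\<Sum>i\<le>m. real (c i) * lam i) * F \<theta>"
    unfolding S(3) sum_distrib_left by (intro sum.cong refl) (simp only: mult_ac)
  finally show ?thesis .
qed

lemma Dstar_fund:
  fixes q :: "'y::finite \<Rightarrow> 'y \<Rightarrow> real"
  assumes q: "stochastic_sym_irred q" and l0: "lam 0 = 1"
    and g: "g \<in> fundamental q lam m (type_prime c) A" and A: "A \<subseteq> {1..n}" "card A = s"
    and c0: "c 0 > 0"
  shows "Dstar n (Suc s) g \<in> Pkc n q lam m (Suc s) c"
proof -
  obtain ix Fj where h: "\<forall>j\<in>A. ix j \<le> m \<and> Fj j \<in> Wsp q lam (ix j)"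
    "\<forall>i\<le>m. card {j\<in>A. ix j = i} = type_prime c i"
    "g = (\<lambda>\<theta>. if dom \<theta> = A then (\<Prod>j\<in>A. Fj j (the (\<theta> j))) else 0)"
    using g unfolding fundamental_def by blast
  have finA: "finite A" using A finite_subset by blast
  define gx where "gx x = (\<lambda>\<theta>::nat \<Rightarrow> 'y option. if dom \<theta> = insert x A then
      (\<Prod>i\<in>insert x A. (Fj(x := (\<lambda>_. 1))) i (the (\<theta> i))) else 0)" for x
  have gxf: "gx x \<in> fundamental q lam m c (insert x A)" if x: "x \<in> {1..n} - A" for x
    unfolding fundamental_def
  proof (rule CollectI, rule exI[of _ "ix(x:=0)"], rule exI[of _ "Fj(x := (\<lambda>_. 1))"], intro conjI)
    show "\<forall>j\<in>insert x A. (ix(x:=0)) j \<le> m \<and> (Fj(x := (\<lambda>_. 1))) j \<in> Wsp q lam ((ix(x:=0)) j)"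
      using h(1) const_W0[of q lam, OF q l0] by auto
    show "\<forall>i\<le>m. card {j\<in>insert x A. (ix(x:=0)) j = i} = c i"
    proof (intro allI impI)
      fix i assume i: "i \<le> m"
      show "card {j\<in>insert x A. (ix(x:=0)) j = i} = c i"
      proof (cases "i = 0")
        case True
        have "{j\<in>insert x A. (ix(x:=0)) j = i} = insert x {j\<in>A. ix j = 0}" using True x by auto
        moreover have "card (insert x {j\<in>A. ix j = 0}) = Suc (card {j\<in>A. ix j = 0})"
          using x finA by simp
        moreover have "card {j\<in>A. ix j = 0} = c 0 - 1" using h(2) unfolding type_prime_def by auto
        ultimately show ?thesis using True c0 by simp
      next
        case False
        have "{j\<in>insert x A. (ix(x:=0)) j = i} = {j\<in>A. ix j = i}" using False x by auto
        thus ?thesis using h(2) i False unfolding type_prime_def by auto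
      qed
    qed
    show "gx x = (\<lambda>\<theta>. if dom \<theta> = insert x A then (\<Prod>j\<in>insert x A. (Fj(x := (\<lambda>_. 1))) j (the (\<theta> j))) else 0)"
      unfolding gx_def ..
  qed
  have eq: "Dstar n (Suc s) g = (\<lambda>\<theta>. \<Sum>x\<in>{1..n} - A. 1 * gx x \<theta>)"
  proof
    fix \<theta> :: "nat \<Rightarrow> 'y option"
    define P where "P = (\<Prod>i\<in>A. Fj i (the (\<theta> i)))"
    have gxe: "gx x \<theta> = (if dom \<theta> = insert x A then P else 0)" if "x \<notin> A" for x
    proof -
      have "(\<Prod>i\<in>insert x A. (Fj(x := (\<lambda>_. 1))) i (the (\<theta> i))) = (\<Prod>i\<in>A. (Fj(x := (\<lambda>_. 1))) i (the (\<theta> i)))"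
        using that finA by simp
      also have "\<dots> = P" unfolding P_def by (rule prod.cong) (use that in auto)
      finally show ?thesis unfolding gx_def by simp
    qed
    have R: "(\<Sum>x\<in>{1..n} - A. 1 * gx x \<theta>) = (\<Sum>x\<in>{1..n} - A. if dom \<theta> = insert x A then P else 0)"
      by (rule sum.cong[OF refl]) (simp add: gxe)
    show "Dstar n (Suc s) g \<theta> = (\<Sum>x\<in>{1..n} - A. 1 * gx x \<theta>)"
    proof (cases "\<theta> \<in> Theta n (Suc s)")
      case False
      have "\<forall>x\<in>{1..n} - A. dom \<theta> \<noteq> insert x A"
      proof
        fix x assume x: "x \<in> {1..n} - A"
        show "dom \<theta> \<noteq> insert x A"
        proof
          assume "dom \<theta> = insert x A"
          hence "\<theta> \<in> Theta n (Suc s)" using x A finA unfolding Theta_def by auto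
          thus False using False by simp
        qed
      qed
      hence "(\<Sum>x\<in>{1..n} - A. 1 * gx x \<theta>) = 0" unfolding R by simp
      moreover have "Dstar n (Suc s) g \<theta> = 0" using False unfolding Dstar_def by simp
      ultimately show ?thesis by simp
    next
      case True
      have dt: "dom \<theta> \<subseteq> {1..n}" "finite (dom \<theta>)" using True Theta_fin[OF True] unfolding Theta_def by auto
      have "Dstar n (Suc s) g \<theta> = (\<Sum>j\<in>dom \<theta>. g (\<theta>(j:=None)))" using Dstar_expand[OF True] by simp
      also have "\<dots> = (\<Sum>j\<in>dom \<theta>. if dom \<theta> - {j} = A then P else 0)"
      proof (rule sum.cong[OF refl])
        fix j assume j: "j \<in> dom \<theta>"
        show "g (\<theta>(j:=None)) = (if dom \<theta> - {j} = A then P else 0)"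
        proof (cases "dom \<theta> - {j} = A")
          case True
          hence "j \<notin> A" by auto
          hence "(\<Prod>i\<in>A. Fj i (the ((\<theta>(j:=None)) i))) = P" unfolding P_def
            by (intro prod.cong) auto
          thus ?thesis unfolding h(3) using True by simp
        next
          case False thus ?thesis unfolding h(3) by simp
        qed
      qed
      also have "\<dots> = real (card {j\<in>dom \<theta>. dom \<theta> - {j} = A}) * P" by (rule sum_if_card[OF dt(2)])
      also have "{j\<in>dom \<theta>. dom \<theta> - {j} = A} = {x\<in>{1..n} - A. dom \<theta> = insert x A}"
      proof (intro set_eqI iffI)
        fix j assume "j \<in> {j\<in>dom \<theta>. dom \<theta> - {j} = A}"
        hence j: "j \<in> dom \<theta>" "dom \<theta> - {j} = A" by auto
        hence "j \<notin> A" by blast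
        moreover have "dom \<theta> = insert j A" using j by blast
        ultimately show "j \<in> {x\<in>{1..n} - A. dom \<theta> = insert x A}" using j dt(1) by blast
      next
        fix j assume "j \<in> {x\<in>{1..n} - A. dom \<theta> = insert x A}"
        hence j: "j \<notin> A" "dom \<theta> = insert j A" by auto
        hence "dom \<theta> - {j} = A" by blast
        thus "j \<in> {j\<in>dom \<theta>. dom \<theta> - {j} = A}" using j by blast
      qed
      also have "real (card {x\<in>{1..n} - A. dom \<theta> = insert x A}) * P =
          (\<Sum>x\<in>{1..n} - A. if dom \<theta> = insert x A then P else 0)"
        by (rule sum_if_card[symmetric]) simp
      finally show ?thesis using R by simp
    qed
  qed
  show ?thesis unfolding eq Pkc_def
  proof (rule lin_span_sum)
    show "finite ({1..n} - A)" by simp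
    show "\<forall>i\<in>{1..n} - A. gx i \<in> lin_span (\<Union>A\<in>{A. A \<subseteq> {1..n} \<and> card A = Suc s}. fundamental q lam m c A)"
    proof
      fix x assume x: "x \<in> {1..n} - A"
      have "insert x A \<subseteq> {1..n}" "card (insert x A) = Suc s" using x A finA by auto
      thus "gx x \<in> lin_span (\<Union>A\<in>{A. A \<subseteq> {1..n} \<and> card A = Suc s}. fundamental q lam m c A)"
        using gxf[OF x] by (intro lin_span_base) blast
    qed
  qed
qed



lemma Dstar_zero: "Dstar n t (\<lambda>_. 0) = (\<lambda>_. 0)"
  unfolding Dstar_def by auto

lemma Dstar_Pkc:
  fixes q :: "'y::finite \<Rightarrow> 'y \<Rightarrow> real"
  assumes q: "stochastic_sym_irred q" and l0: "lam 0 = 1"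
    and G: "G \<in> Pkc n q lam m s (type_prime c)" and c0: "c 0 > 0"
  shows "Dstar n (Suc s) G \<in> Pkc n q lam m (Suc s) c"
proof -
  obtain S cc where S: "finite S" "\<forall>g\<in>S. \<exists>A. A \<subseteq> {1..n} \<and> card A = s \<and> g \<in> fundamental q lam m (type_prime c) A"
    "G = (\<lambda>x. \<Sum>g\<in>S. cc g * g x)" using Pkc_obtain[OF G] by blast
  have "Dstar n (Suc s) G = (\<lambda>\<theta>. \<Sum>g\<in>S. cc g * Dstar n (Suc s) g \<theta>)"
    unfolding S(3) by (rule ext, rule Dstar_lin)
  also have "\<dots> \<in> Pkc n q lam m (Suc s) c" unfolding Pkc_def
  proof (rule lin_span_sum[OF S(1)], rule ballI)
    fix g assume "g \<in> S"
    then obtain A where A: "A \<subseteq> {1..n}" "card A = s" "g \<in> fundamental q lam m (type_prime c) A"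
      using S(2) by blast
    show "Dstar n (Suc s) g \<in> lin_span (\<Union>A\<in>{A. A \<subseteq> {1..n} \<and> card A = Suc s}. fundamental q lam m c A)"
      using Dstar_fund[OF q l0 A(3) A(1,2) c0] unfolding Pkc_def .
  qed
  finally show ?thesis .
qed

lemma main_ind:
  fixes q :: "'y::finite \<Rightarrow> 'y \<Rightarrow> real"
  assumes q: "stochastic_sym_irred q" and l0: "lam 0 = 1" and inj: "inj_on lam {0..m}"
  shows "F \<in> Pdiff n q lam m k d c \<Longrightarrow> k + d \<le> n \<Longrightarrow>
    F \<in> Pkc n q lam m (k + d) c \<and>
    (\<forall>\<theta>\<in>Theta n (k + d). Kop n F \<theta> =
       real CARD('y) * (real d * (real n - real k + 1 - real (c 0)) - real (c 0)) * F \<theta>)"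
proof (induction d arbitrary: c F)
  case 0
  hence F: "F \<in> Pkc n q lam m k c" "Dop n k F = (\<lambda>_. 0)" by auto
  have "Kop n F \<theta> = real CARD('y) * (real 0 * (real n - real k + 1 - real (c 0)) - real (c 0)) * F \<theta>"
    if th: "\<theta> \<in> Theta n k" for \<theta>
  proof -
    have "Dstar n k (Dop n k F) \<theta> = 0" unfolding F(2) Dstar_zero ..
    hence "Kop n F \<theta> = - Jop F \<theta>" using DSD[OF th, of F] by simp
    thus ?thesis using J_Pkc[OF q l0 inj F(1)] by simp
  qed
  thus ?case using F by simp
next
  case (Suc d)
  show ?case
  proof (cases "c 0 = 0")
    case True
    hence "F = (\<lambda>_. 0)" using Suc.prems Dstar_zero by auto
    moreover have "Kop n (\<lambda>_. 0) \<theta> = 0" for \<theta> unfolding Kop_def by simp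
    ultimately show ?thesis unfolding Pkc_def using lin_span_zero by auto
  next
    case False
    then obtain G where G: "G \<in> Pdiff n q lam m k d (type_prime c)" "F = Dstar n (Suc (k + d)) G"
      using Suc.prems by auto
    have IH: "G \<in> Pkc n q lam m (k + d) (type_prime c)"
      "\<forall>\<phi>\<in>Theta n (k + d). Kop n G \<phi> = real CARD('y) * (real d * (real n - real k + 1 - real (type_prime c 0)) - real (type_prime c 0)) * G \<phi>"
      using Suc.IH[OF G(1)] Suc.prems(2) by auto
    have tp: "real (type_prime c 0) = real (c 0) - 1" using False unfolding type_prime_def by auto
    have FP: "F \<in> Pkc n q lam m (k + Suc d) c" using Dstar_Pkc[OF q l0 IH(1)] False G(2) by simp
    define ev where "ev = real d * (real n - real k + 1 - real (type_prime c 0)) - real (type_prime c 0)"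
    have nk: "real (n - (k + d)) = real n - real k - real d" using Suc.prems(2) by simp
    have "Kop n F \<theta> = real CARD('y) * (real (Suc d) * (real n - real k + 1 - real (c 0)) - real (c 0)) * F \<theta>"
      if th: "\<theta> \<in> Theta n (k + Suc d)" for \<theta>
    proof -
      have th': "\<theta> \<in> Theta n (Suc (k + d))" using th by simp
      have "Dstar n (Suc (k + d)) (Dop n (Suc (k + d)) F) \<theta> =
          (\<Sum>j\<in>dom \<theta>. Dop n (Suc (k + d)) F (\<theta>(j:=None)))"
        using Dstar_expand[OF th'] by simp
      also have "\<dots> = (\<Sum>j\<in>dom \<theta>. real CARD('y) * (real (n - (k + d)) + ev) * G (\<theta>(j:=None)))"
      proof (rule sum.cong[OF refl])
        fix j assume j: "j \<in> dom \<theta>"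
        have ph: "\<theta>(j:=None) \<in> Theta n (k + d)" using Theta_del[OF th' j] by simp
        show "Dop n (Suc (k + d)) F (\<theta>(j:=None)) = real CARD('y) * (real (n - (k + d)) + ev) * G (\<theta>(j:=None))"
        proof -
          have K: "Kop n G (\<theta>(j:=None)) = real CARD('y) * ev * G (\<theta>(j:=None))"
            using IH(2) ph unfolding ev_def by blast
          show ?thesis unfolding G(2) DDS[OF ph] K by (simp add: algebra_simps)
        qed
      qed
      also have "\<dots> = real CARD('y) * (real (n - (k + d)) + ev) * F \<theta>"
        unfolding G(2) using Dstar_expand[OF th', of G] by (simp add: sum_distrib_left)
      finally have DD: "Dstar n (Suc (k + d)) (Dop n (Suc (k + d)) F) \<theta> = real CARD('y) * (real (n - (k + d)) + ev) * F \<theta>" .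
      have "Kop n F \<theta> = Dstar n (Suc (k + d)) (Dop n (Suc (k + d)) F) \<theta> - Jop F \<theta>"
        using DSD[OF th', of F] by simp
      also have "\<dots> = real CARD('y) * (real (n - (k + d)) + ev - real (c 0)) * F \<theta>"
        unfolding DD J_Pkc[OF q l0 inj FP] by (simp add: algebra_simps)
      also have "real (n - (k + d)) + ev - real (c 0) = real (Suc d) * (real n - real k + 1 - real (c 0)) - real (c 0)"
        unfolding nk ev_def tp by (simp add: algebra_simps)
      finally show ?thesis .
    qed
    thus ?thesis using FP by simp
  qed
qed



theorem theorem7p14:
  fixes n h k m :: nat and q :: "'y::finite \<Rightarrow> 'y \<Rightarrow> real" and lam :: "nat \<Rightarrow> real"
    and p0 :: real and a :: "nat \<Rightarrow> nat" and F :: "(nat \<Rightarrow> 'y option) \<Rightarrow> real"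
  assumes "n \<ge> 2"
    and "stochastic_sym_irred q"
    and "lam 0 = 1" and "inj_on lam {0..m}"
    and "{\<mu>. \<exists>f. f \<noteq> (\<lambda>_. 0) \<and> Qop q f = (\<lambda>y. \<mu> * f y)} = lam ` {0..m}"
    and "1 \<le> h" and "h \<le> n - 1"
    and "0 < p0" and "p0 < 1"
    and "type_size m a = h"
    and "type_ell m a \<le> k" and "k \<le> h"
    and "F \<in> Phck n q lam m h a k"
  shows "\<forall>\<theta>\<in>Theta n h. Pop n h p0 q F \<theta> =
     (p0 * (1 / real h) * (\<Sum>j\<le>m. real (a j) * lam j)
      + (1 - p0) * (((real n + real (type_ell m a) - real k - real h) * (real h - real k + 1)
                      - (real n - real h)) / (real h * (real n - real h)))) * F \<theta>"
proof
  fix \<theta> :: "nat \<Rightarrow> 'y option" assume th: "\<theta> \<in> Theta n h"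
  have hk: "k + (h - k) = h" using assms(12) by simp
  have R: "F \<in> Pkc n q lam m h a \<and>
    (\<forall>\<theta>\<in>Theta n h. Kop n F \<theta> =
       real CARD('y) * (real (h - k) * (real n - real k + 1 - real (a 0)) - real (a 0)) * F \<theta>)"
    using main_ind[OF assms(2,3,4), of F n k "h - k" a] assms(13,7,1) hk unfolding Phck_def by simp
  have K: "Deltaop n h F \<theta> = real CARD('y) * (real (h - k) * (real n - real k + 1 - real (a 0)) - real (a 0)) * F \<theta>"
    using R Delta_K[OF th assms(6), of F] th by simp
  have M: "Mop n h q F \<theta> = (1 / real h) * ((\<Sum>i\<le>m. real (a i) * lam i) * F \<theta>)"
    unfolding Mop_def using th M_Pkc[of F n q lam m h a \<theta>] R unfolding Mraw_def by simp
  have a0: "real (a 0) = real h - real (type_ell m a)"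
  proof -
    have "(\<Sum>i\<le>m. a i) = a 0 + (\<Sum>i\<in>{1..m}. a i)"
    proof -
      have "{..m} = insert 0 {1..m}" by auto
      thus ?thesis by simp
    qed
    thus ?thesis using assms(10) unfolding type_size_def type_ell_def by simp
  qed
  have nh: "real (n - h) = real n - real h" using assms(7) by simp
  have hk': "real (h - k) = real h - real k" using assms(12) by simp
  have pos: "real h > 0" "real n - real h > 0" "real CARD('y) > 0" using assms(6,7,1) by auto
  show "Pop n h p0 q F \<theta> =
     (p0 * (1 / real h) * (\<Sum>j\<le>m. real (a j) * lam j)
      + (1 - p0) * (((real n + real (type_ell m a) - real k - real h) * (real h - real k + 1)
                      - (real n - real h)) / (real h * (real n - real h)))) * F \<theta>"
    unfolding Pop_def K M nh hk' a0 using pos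
    by (simp add: field_simps)
qed

end
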